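(* Consider a sequence of matched studies indexed by $I\to\infty$ with general set sizes $n_i\ge2$, and assume Fisher's null $H_0$ holds. Let $\Gamma\in[1,\infty]^I$ (possibly depending on $I$) satisfy $\Gamma^\star\preccurlyeq\Gamma$, and suppose Conditions A1 and A2($\Gamma$) hold. Then for every $c\ge0$, $$\limsup_{I\to\infty}\mathbb P\{T\ge\mu(\Gamma)+c\,\sigma(\Gamma)\}\le 1-\Phi(c),$$ where $\Phi$ is the standard normal distribution function.
   Context: Setting: $I$ matched sets, set $i$ has $n_i\ge2$ units, $N=\sum_in_i$; potential outcomes fixed; $Z\in\mathcal Z=\{z\in\{0,1\}^N:\sum_jz_{ij}=1\ \forall i\}$ is random with true mechanism $\mathbb P(Z=z)=\prod_i\prod_j(p^\star_{ij})^{z_{ij}}$, $p^\star_{ij}\ge0$, $\sum_jp^\star_{ij}=1$; true hidden bias $\Gamma^\star_i=\max_jp^\star_{ij}/\min_kp^\star_{ik}\in[1,\infty]$; $a\preccurlyeq b$ means coordinatewise $\le$. Fisher's null $H_0$: $Y_{ij}(1)=Y_{ij}(0)$ for all $i,j$. $T=\sum_iT_i$, $T_i=\sum_jZ_{ij}q_{ij}$, $q_{ij}$ fixed functions of $Y(0)$. True moments: $\mu_i=\mathbb ET_i$, $v_i^2=\mathrm{Var}(T_i)$. Sort $q_{i(1)}\le\dots\le q_{i(n_i)}$, $R_i=q_{i(n_i)}-q_{i(1)}$. For $\Gamma_i\in[1,\infty)$ and $1\le a\le n_i-1$: $\mu_{ia}(\Gamma_i)=\frac{\sum_{j\le a}q_{i(j)}+\Gamma_i\sum_{j>a}q_{i(j)}}{a+\Gamma_i(n_i-a)}$,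 $v_{ia}^2(\Gamma_i)=\frac{\sum_{j\le a}q_{i(j)}^2+\Gamma_i\sum_{j>a}q_{i(j)}^2}{a+\Gamma_i(n_i-a)}-\mu_{ia}(\Gamma_i)^2$; $\mu_i(\Gamma_i)=\max_a\mu_{ia}(\Gamma_i)$ and $v_i^2(\Gamma_i)=\max\{v_{ia}^2(\Gamma_i):\mu_{ia}(\Gamma_i)=\mu_i(\Gamma_i)\}$; for $\Gamma_i=\infty$, $\mu_i(\infty)=q_{i(n_i)}$, $v_i^2(\infty)=0$. $\mu(\Gamma)=\sum_i\mu_i(\Gamma_i)$, $\sigma^2(\Gamma)=\sum_iv_i^2(\Gamma_i)$. Condition A1: $(\max_iR_i^2)/\sum_iR_i^2/(n_i\Gamma^\star_i)^3\to0$ (terms with $\Gamma^\star_i=\infty$ are $0$). Condition A2($\Gamma$): with $\mathcal A_\Gamma=\{i:v_i^2>v_i^2(\Gamma_i)\}$, $\Delta_\mu(\Gamma)=|\mathcal A_\Gamma|^{-1}\sum_{i\in\mathcal A_\Gamma}\{\mu_i(\Gamma_i)-\mu_i\}$, $\Delta_{v^2}(\Gamma)=|\mathcal A_\Gamma|^{-1}\sum_{i\in\mathcal A_\Gamma}\{v_i^2-v_i^2(\Gamma_i)\}$ (ratio $\Delta_\mu/\Delta_{v^2}$ defined as $\infty$ if $\mathcal A_\Gamma=\emptyset$), $\frac{\Delta_\mu(\Gamma)}{\Delta_{v^2}(\Gamma)}\sqrt{\sum_iR_i^2/(n_i\Gamma^\star_i)^3}\to\infty$. All quantities may depend on $I$.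 *)

theory Defs
  imports "HOL-Probability.Probability"
begin

(* A single matched set with n units; unit j < n has score qi j and treatment prob pr j. *)

definition sorted_q :: "nat \<Rightarrow> (nat \<Rightarrow> real) \<Rightarrow> real list" where
  "sorted_q n qi = sort (map qi [0..<n])"

definition mu_a :: "nat \<Rightarrow> (nat \<Rightarrow> real) \<Rightarrow> real \<Rightarrow> nat \<Rightarrow> real" where
  "mu_a n qi g a =
     (sum_list (take a (sorted_q n qi)) + g * sum_list (drop a (sorted_q n qi)))
     / (real a + g * (real n - real a))"

definition v2_a :: "nat \<Rightarrow> (nat \<Rightarrow> real) \<Rightarrow> real \<Rightarrow> nat \<Rightarrow> real" where
  "v2_a n qi g a =
     (sum_list (map (\<lambda>x. x\<^sup>2) (take a (sorted_q n qi)))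
        + g * sum_list (map (\<lambda>x. x\<^sup>2) (drop a (sorted_q n qi))))
     / (real a + g * (real n - real a)) - (mu_a n qi g a)\<^sup>2"

definition mu_G :: "nat \<Rightarrow> (nat \<Rightarrow> real) \<Rightarrow> ereal \<Rightarrow> real" where
  "mu_G n qi G =
     (if G = \<infinity> then Max (qi ` {..<n})
      else Max ((mu_a n qi (real_of_ereal G)) ` {1..n-1}))"

definition v2_G :: "nat \<Rightarrow> (nat \<Rightarrow> real) \<Rightarrow> ereal \<Rightarrow> real" where
  "v2_G n qi G =
     (if G = \<infinity> then 0
      else Max {v2_a n qi (real_of_ereal G) a | a. a \<in> {1..n-1} \<and>
                  mu_a n qi (real_of_ereal G) a = mu_G n qi G})"

definition Gamma_star :: "nat \<Rightarrow> (nat \<Rightarrow> real) \<Rightarrow> ereal" where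
  "Gamma_star n pr =
     (if Min (pr ` {..<n}) = 0 then \<infinity>
      else ereal (Max (pr ` {..<n}) / Min (pr ` {..<n})))"

definition Rng :: "nat \<Rightarrow> (nat \<Rightarrow> real) \<Rightarrow> real" where
  "Rng n qi = Max (qi ` {..<n}) - Min (qi ` {..<n})"

definition true_mu :: "nat \<Rightarrow> (nat \<Rightarrow> real) \<Rightarrow> (nat \<Rightarrow> real) \<Rightarrow> real" where
  "true_mu n pr qi = (\<Sum>j<n. pr j * qi j)"

definition true_v2 :: "nat \<Rightarrow> (nat \<Rightarrow> real) \<Rightarrow> (nat \<Rightarrow> real) \<Rightarrow> real" where
  "true_v2 n pr qi = (\<Sum>j<n. pr j * (qi j)\<^sup>2) - (true_mu n pr qi)\<^sup>2"

definition A1_term :: "nat \<Rightarrow> (nat \<Rightarrow> real) \<Rightarrow> (nat \<Rightarrow> real) \<Rightarrow> real" where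
  "A1_term n pr qi =
     (if Gamma_star n pr = \<infinity> then 0
      else (Rng n qi)\<^sup>2 / (real n * real_of_ereal (Gamma_star n pr)) ^ 3)"

(* Whole study with I sets: n i sizes, p i j true probabilities, q i j scores *)

definition S_A1 :: "nat \<Rightarrow> (nat \<Rightarrow> nat) \<Rightarrow> (nat \<Rightarrow> nat \<Rightarrow> real) \<Rightarrow> (nat \<Rightarrow> nat \<Rightarrow> real) \<Rightarrow> real" where
  "S_A1 I n p q = (\<Sum>i<I. A1_term (n i) (p i) (q i))"

(* Assignment space Z: a choice of one treated unit z i < n i in every set i < I *)
definition Zset :: "nat \<Rightarrow> (nat \<Rightarrow> nat) \<Rightarrow> (nat \<Rightarrow> nat) set" where
  "Zset I n = PiE {..<I} (\<lambda>i. {..<n i})"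

definition Tstat :: "nat \<Rightarrow> (nat \<Rightarrow> nat \<Rightarrow> real) \<Rightarrow> (nat \<Rightarrow> nat) \<Rightarrow> real" where
  "Tstat I q z = (\<Sum>i<I. q i (z i))"

definition prob_z :: "nat \<Rightarrow> (nat \<Rightarrow> nat \<Rightarrow> real) \<Rightarrow> (nat \<Rightarrow> nat) \<Rightarrow> real" where
  "prob_z I p z = (\<Prod>i<I. p i (z i))"

definition prob_T_ge :: "nat \<Rightarrow> (nat \<Rightarrow> nat) \<Rightarrow> (nat \<Rightarrow> nat \<Rightarrow> real) \<Rightarrow> (nat \<Rightarrow> nat \<Rightarrow> real) \<Rightarrow> real \<Rightarrow> real" where
  "prob_T_ge I n p q t = (\<Sum>z\<in>Zset I n. if Tstat I q z \<ge> t then prob_z I p z else 0)"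

definition mu_Gamma :: "nat \<Rightarrow> (nat \<Rightarrow> nat) \<Rightarrow> (nat \<Rightarrow> nat \<Rightarrow> real) \<Rightarrow> (nat \<Rightarrow> ereal) \<Rightarrow> real" where
  "mu_Gamma I n q G = (\<Sum>i<I. mu_G (n i) (q i) (G i))"

definition sigma_Gamma :: "nat \<Rightarrow> (nat \<Rightarrow> nat) \<Rightarrow> (nat \<Rightarrow> nat \<Rightarrow> real) \<Rightarrow> (nat \<Rightarrow> ereal) \<Rightarrow> real" where
  "sigma_Gamma I n q G = sqrt (\<Sum>i<I. v2_G (n i) (q i) (G i))"

definition A_set :: "nat \<Rightarrow> (nat \<Rightarrow> nat) \<Rightarrow> (nat \<Rightarrow> nat \<Rightarrow> real) \<Rightarrow> (nat \<Rightarrow> nat \<Rightarrow> real) \<Rightarrow> (nat \<Rightarrow> ereal) \<Rightarrow> nat set" where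
  "A_set I n p q G = {i. i < I \<and> true_v2 (n i) (p i) (q i) > v2_G (n i) (q i) (G i)}"

definition Delta_mu :: "nat \<Rightarrow> (nat \<Rightarrow> nat) \<Rightarrow> (nat \<Rightarrow> nat \<Rightarrow> real) \<Rightarrow> (nat \<Rightarrow> nat \<Rightarrow> real) \<Rightarrow> (nat \<Rightarrow> ereal) \<Rightarrow> real" where
  "Delta_mu I n p q G =
     (\<Sum>i\<in>A_set I n p q G. mu_G (n i) (q i) (G i) - true_mu (n i) (p i) (q i))
       / real (card (A_set I n p q G))"

definition Delta_v2 :: "nat \<Rightarrow> (nat \<Rightarrow> nat) \<Rightarrow> (nat \<Rightarrow> nat \<Rightarrow> real) \<Rightarrow> (nat \<Rightarrow> nat \<Rightarrow> real) \<Rightarrow> (nat \<Rightarrow> ereal) \<Rightarrow> real" where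
  "Delta_v2 I n p q G =
     (\<Sum>i\<in>A_set I n p q G. true_v2 (n i) (p i) (q i) - v2_G (n i) (q i) (G i))
       / real (card (A_set I n p q G))"

definition A2_quantity :: "nat \<Rightarrow> (nat \<Rightarrow> nat) \<Rightarrow> (nat \<Rightarrow> nat \<Rightarrow> real) \<Rightarrow> (nat \<Rightarrow> nat \<Rightarrow> real) \<Rightarrow> (nat \<Rightarrow> ereal) \<Rightarrow> ereal" where
  "A2_quantity I n p q G =
     (if A_set I n p q G = {} then \<infinity>
      else ereal (Delta_mu I n p q G / Delta_v2 I n p q G * sqrt (S_A1 I n p q)))"

definition Phi :: "real \<Rightarrow> real" where
  "Phi = cdf (density lborel std_normal_density)"

end

theory Submission
  imports Defs
begin

lemma sorted_take_filter:
  fixes ys :: "real list"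
  assumes "sorted ys"
  shows "take (length (filter (\<lambda>y. y \<le> L) ys)) ys = filter (\<lambda>y. y \<le> L) ys
       \<and> drop (length (filter (\<lambda>y. y \<le> L) ys)) ys = filter (\<lambda>y. \<not> y \<le> L) ys"
  using assms
proof (induction ys)
  case Nil
  then show ?case by simp
next
  case (Cons x xs)
  show ?case
  proof (cases "x \<le> L")
    case True
    then show ?thesis using Cons by simp
  next
    case False
    then have "\<forall>y\<in>set xs. \<not> y \<le> L" using Cons.prems by auto
    then have "filter (\<lambda>y. y \<le> L) xs = []" "filter (\<lambda>y. \<not> y \<le> L) xs = xs"
      by (auto simp: filter_empty_conv)
    then show ?thesis using False by simp
  qed
qed

lemma sum_list_minus_const:
  fixes xs :: "real list"
  shows "sum_list (map (\<lambda>y. y - c) xs) = sum_list xs - real (length xs) * c"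
  by (induction xs) (auto simp: algebra_simps)

lemma sum_list_sq_dev:
  fixes xs :: "real list"
  shows "sum_list (map (\<lambda>y. (y - m)\<^sup>2) xs) =
     sum_list (map (\<lambda>y. y\<^sup>2) xs) - 2 * m * sum_list xs + real (length xs) * m\<^sup>2"
  by (induction xs) (auto simp: algebra_simps power2_eq_square)

lemma len_sorted_q [simp]: "length (sorted_q n qi) = n"
  by (simp add: sorted_q_def)

lemma sorted_sorted_q: "sorted (sorted_q n qi)"
  by (simp add: sorted_q_def)

lemma denom_pos:
  assumes "a \<le> n" "1 \<le> (g::real)" "1 \<le> n"
  shows "real a + g * (real n - real a) > 0"
proof -
  have "g * (real n - real a) \<ge> 1 * (real n - real a)"
    using assms by (intro mult_right_mono) auto
  then show ?thesis using assms by auto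
qed

lemma Gsplit:
  assumes "a \<le> n" "1 \<le> (g::real)" "1 \<le> n"
  shows "(real a + g * (real n - real a)) * (mu_a n qi g a - L) =
     sum_list (map (\<lambda>y. y - L) (take a (sorted_q n qi)))
     + g * sum_list (map (\<lambda>y. y - L) (drop a (sorted_q n qi)))"
proof -
  have W: "real a + g * (real n - real a) > 0" using denom_pos assms by blast
  have "(real a + g * (real n - real a)) * mu_a n qi g a =
      sum_list (take a (sorted_q n qi)) + g * sum_list (drop a (sorted_q n qi))"
    using W unfolding mu_a_def by simp
  then show ?thesis using assms
    by (simp add: sum_list_minus_const algebra_simps of_nat_diff)
qed

lemma v2_a_nonneg:
  assumes "a \<le> n" "1 \<le> (g::real)" "1 \<le> n"
  shows "v2_a n qi g a \<ge> 0"
proof -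
  define W where "W = real a + g * (real n - real a)"
  define m where "m = mu_a n qi g a"
  define A where "A = take a (sorted_q n qi)"
  define B where "B = drop a (sorted_q n qi)"
  have W: "W > 0" using denom_pos assms W_def by blast
  have lA: "length A = a" and lB: "length B = n - a" using assms by (auto simp: A_def B_def)
  have mW: "W * m = sum_list A + g * sum_list B"
    using W unfolding mu_a_def m_def W_def A_def B_def by simp
  have nn: "0 \<le> sum_list (map (\<lambda>y. (y - m)\<^sup>2) A) + g * sum_list (map (\<lambda>y. (y - m)\<^sup>2) B)"
    using assms by (intro add_nonneg_nonneg mult_nonneg_nonneg sum_list_nonneg) auto
  also have "\<dots> = (sum_list (map (\<lambda>y. y\<^sup>2) A) + g * sum_list (map (\<lambda>y. y\<^sup>2) B))
      - 2 * m * (sum_list A + g * sum_list B) + W * m\<^sup>2"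
    unfolding sum_list_sq_dev lA lB W_def using assms by (simp add: algebra_simps of_nat_diff)
  also have "\<dots> = (sum_list (map (\<lambda>y. y\<^sup>2) A) + g * sum_list (map (\<lambda>y. y\<^sup>2) B)) - W * m\<^sup>2"
    unfolding mW[symmetric] by (simp add: power2_eq_square)
  finally have "0 \<le> (sum_list (map (\<lambda>y. y\<^sup>2) A) + g * sum_list (map (\<lambda>y. y\<^sup>2) B)) / W - m\<^sup>2"
    using W by (simp add: field_simps)
  then show ?thesis unfolding v2_a_def m_def A_def B_def W_def .
qed

lemma sum_list_sort_map: "sum_list (map (f::real\<Rightarrow>real) (sort xs)) = sum_list (map f (xs::real list))"
proof -
  have "mset (map f (sort xs)) = mset (map f xs)" by simp
  then have "sum_mset (mset (map f (sort xs))) = sum_mset (mset (map f xs))" by simp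
  then show ?thesis by (simp only: sum_mset_sum_list)
qed

lemma sum_list_map_upt: "sum_list (map (\<lambda>j. f (q j)) [0..<n]) = (\<Sum>j<n. f (q j) :: real)"
  by (induction n) auto

lemma mean_bound_fin:
  fixes p q :: "nat \<Rightarrow> real" and g m :: real
  assumes n: "2 \<le> n" and g: "1 \<le> g" and m: "0 < m"
    and pl: "\<And>j. j<n \<Longrightarrow> m \<le> p j" and pu: "\<And>j. j<n \<Longrightarrow> p j \<le> g*m"
    and ps: "(\<Sum>j<n. p j) = 1"
  shows "(\<Sum>j<n. p j * q j) \<le> Max (mu_a n q g ` {1..n-1})"
proof -
  define L where "L = Max (mu_a n q g ` {1..n-1})"
  have finS: "finite (mu_a n q g ` {1..n-1})" by simp
  have neS: "mu_a n q g ` {1..n-1} \<noteq> {}" using n by auto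
  have muL: "mu_a n q g a \<le> L" if "a \<in> {1..n-1}" for a
    unfolding L_def using finS that by (intro Max_ge) auto
  define ys where "ys = sorted_q n q"
  define f where "f y = (if y \<le> L then y - L else g * (y - L))" for y
  have step1: "p j * (q j - L) \<le> m * f (q j)" if "j < n" for j
  proof (cases "q j \<le> L")
    case True
    then show ?thesis using pl[OF that] unfolding f_def
      by (simp add: mult_right_mono_neg)
  next
    case False
    then show ?thesis using pu[OF that] unfolding f_def
      by (simp add: mult_right_mono mult.commute)
  qed
  have "(\<Sum>j<n. p j * (q j - L)) \<le> (\<Sum>j<n. m * f (q j))"
    by (intro sum_mono step1) auto
  also have "\<dots> = m * (\<Sum>j<n. f (q j))" by (simp add: sum_distrib_left)
  also have "(\<Sum>j<n. f (q j)) = sum_list (map f ys)"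
    unfolding ys_def sorted_q_def sum_list_sort_map
    using sum_list_map_upt[of f q n] by (simp add: comp_def)
  finally have A: "(\<Sum>j<n. p j * (q j - L)) \<le> m * sum_list (map f ys)" .
  define k where "k = length (filter (\<lambda>y. y \<le> L) ys)"
  have tf: "take k ys = filter (\<lambda>y. y \<le> L) ys" "drop k ys = filter (\<lambda>y. \<not> y \<le> L) ys"
    using sorted_take_filter[OF sorted_sorted_q, of L n q] unfolding k_def ys_def by auto
  have lys: "length ys = n" by (simp add: ys_def)
  have "sum_list (map f ys) = sum_list (map f (take k ys)) + sum_list (map f (drop k ys))"
    by (metis append_take_drop_id map_append sum_list_append)
  also have "map f (take k ys) = map (\<lambda>y. y - L) (take k ys)"
    unfolding tf f_def by (intro map_cong) auto
  also have "map f (drop k ys) = map (\<lambda>y. g * (y - L)) (drop k ys)"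
    unfolding tf f_def by (intro map_cong) auto
  also have "sum_list (map (\<lambda>y. g * (y - L)) (drop k ys)) = g * sum_list (map (\<lambda>y. y - L) (drop k ys))"
    by (simp add: sum_list_const_mult)
  finally have F: "sum_list (map f ys) = sum_list (map (\<lambda>y. y - L) (take k ys)) + g * sum_list (map (\<lambda>y. y - L) (drop k ys))" .
  have kn: "k \<le> n" unfolding k_def using lys by (metis length_filter_le)
  have "sum_list (map f ys) \<le> 0"
  proof (cases "k = 0")
    case True
    have allgt: "\<forall>y\<in>set ys. y > L"
    proof -
      have "filter (\<lambda>y. y \<le> L) ys = []" using True k_def by simp
      then show ?thesis by (auto simp: filter_empty_conv)
    qed
    have "1 \<in> {1..n-1}" using n by auto
    have G1: "(real 1 + g * (real n - real 1)) * (mu_a n q g 1 - L) \<le> 0"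
      using muL[OF \<open>1 \<in> {1..n-1}\<close>] denom_pos[of 1 n g] n g
      by (intro mult_nonneg_nonpos) auto
    have "take 1 ys = [hd ys]" using lys n by (cases ys) auto
    moreover have "hd ys \<in> set ys" using lys n by (cases ys) auto
    ultimately have "sum_list (map (\<lambda>y. y - L) (take 1 ys)) > 0" using allgt by auto
    moreover have "sum_list (map (\<lambda>y. y - L) (drop 1 ys)) \<ge> 0"
      using allgt by (intro sum_list_nonneg) (auto dest!: in_set_dropD intro: less_imp_le)
    moreover have "g * sum_list (map (\<lambda>y. y - L) (drop 1 ys)) \<ge> 0"
      using calculation(2) g by simp
    ultimately have "(real 1 + g * (real n - real 1)) * (mu_a n q g 1 - L) > 0"
      using Gsplit[of 1 n g q L] n g unfolding ys_def by linarith
    then show ?thesis using G1 by simp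
  next
    case False
    show ?thesis
    proof (cases "k = n")
      case True
      then have "drop k ys = []" using lys by simp
      moreover have "sum_list (map (\<lambda>y. y - L) (take k ys)) \<le> 0"
        unfolding tf by (intro sum_list_nonpos) auto
      ultimately show ?thesis using F by simp
    next
      case False2: False
      have "k \<in> {1..n-1}" using False False2 kn by auto
      then have "(real k + g * (real n - real k)) * (mu_a n q g k - L) \<le> 0"
        using muL denom_pos[of k n g] n g kn
        by (intro mult_nonneg_nonpos) auto
      then show ?thesis using F Gsplit[of k n g q L] kn n g unfolding ys_def by simp
    qed
  qed
  with A m mult_nonneg_nonpos[of m "sum_list (map f ys)"] have "(\<Sum>j<n. p j * (q j - L)) \<le> 0"
    by linarith
  moreover have "(\<Sum>j<n. p j * (q j - L)) = (\<Sum>j<n. p j * q j) - L"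
  proof -
    have "(\<Sum>j<n. p j * (q j - L)) = (\<Sum>j<n. p j * q j) - L * (\<Sum>j<n. p j)"
      by (simp add: algebra_simps sum_subtractf sum_distrib_left)
    then show ?thesis using ps by simp
  qed
  ultimately show ?thesis unfolding L_def by simp
qed

lemma mu_G_ge:
  fixes p q :: "nat \<Rightarrow> real"
  assumes n: "2 \<le> n" and p0: "\<And>j. j < n \<Longrightarrow> 0 \<le> p j" and ps: "(\<Sum>j<n. p j) = 1"
    and G1: "1 \<le> G" and Gd: "Gamma_star n p \<le> G"
  shows "true_mu n p q \<le> mu_G n q G"
proof (cases "G = \<infinity>")
  case True
  have "true_mu n p q = (\<Sum>j<n. p j * q j)" by (simp add: true_mu_def)
  also have "\<dots> \<le> (\<Sum>j<n. p j * Max (q ` {..<n}))"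
    using p0 by (intro sum_mono mult_left_mono) auto
  also have "\<dots> = Max (q ` {..<n})" using ps by (simp add: sum_distrib_right[symmetric])
  finally show ?thesis using True by (simp add: mu_G_def)
next
  case False
  obtain g where g: "G = ereal g" using False G1 by (cases G) auto
  have g1: "1 \<le> g" using G1 g by simp
  have fin: "finite (p ` {..<n})" "p ` {..<n} \<noteq> {}" using n by (auto simp: lessThan_empty_iff)
  define m where "m = Min (p ` {..<n})"
  define M where "M = Max (p ` {..<n})"
  have mle: "m \<le> p j" if "j < n" for j unfolding m_def using fin that by auto
  have Mge: "p j \<le> M" if "j < n" for j unfolding M_def using fin that by auto
  have m0: "0 \<le> m" unfolding m_def using fin p0 by (auto simp: Min_ge_iff)
  have "Gamma_star n p \<noteq> \<infinity>" using Gd g by auto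
  then have mne: "m \<noteq> 0" unfolding Gamma_star_def m_def by (auto split: if_splits)
  with m0 have mpos: "0 < m" by simp
  have "ereal (M / m) \<le> ereal g" using Gd g mne unfolding Gamma_star_def m_def M_def by simp
  then have "M / m \<le> g" by simp
  then have Mg: "M \<le> g * m" using mpos by (simp add: field_simps)
  have "(\<Sum>j<n. p j * q j) \<le> Max (mu_a n q g ` {1..n-1})"
    by (rule mean_bound_fin[OF n g1 mpos mle _ ps]) (use Mge Mg in \<open>auto intro: order_trans\<close>)
  then show ?thesis using g False by (simp add: mu_G_def true_mu_def)
qed

lemma v2_G_nonneg:
  assumes n: "2 \<le> n" and G1: "1 \<le> G"
  shows "0 \<le> v2_G n q G"
proof (cases "G = \<infinity>")
  case True then show ?thesis by (simp add: v2_G_def)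
next
  case False
  obtain g where g: "G = ereal g" using False G1 by (cases G) auto
  have g1: "1 \<le> g" using G1 g by simp
  define S where "S = {v2_a n q g a | a. a \<in> {1..n-1} \<and> mu_a n q g a = mu_G n q G}"
  have Seq: "S = (\<lambda>a. v2_a n q g a) ` {a \<in> {1..n-1}. mu_a n q g a = mu_G n q G}"
    unfolding S_def by auto
  have "mu_G n q G \<in> mu_a n q g ` {1..n-1}"
    unfolding mu_G_def using False g n by (simp del: atLeastAtMost_iff)
  then obtain a where a: "a \<in> {1..n-1}" "mu_a n q g a = mu_G n q G" by auto
  have fS: "finite S" unfolding Seq by simp
  have "v2_a n q g a \<in> S" unfolding S_def using a by blast
  moreover have "0 \<le> v2_a n q g a" using a n g1 by (intro v2_a_nonneg) auto
  ultimately have "0 \<le> Max S" using fS by (meson Max_ge order_trans)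
  then show ?thesis unfolding v2_G_def S_def using False g by simp
qed

lemma true_v2_alt:
  fixes p q :: "nat \<Rightarrow> real"
  assumes ps: "(\<Sum>j<n. p j) = 1"
  shows "true_v2 n p q = (\<Sum>j<n. p j * (q j - true_mu n p q)\<^sup>2)"
proof -
  define mu where "mu = true_mu n p q"
  have "(\<Sum>j<n. p j * (q j - mu)\<^sup>2) = (\<Sum>j<n. p j * (q j)\<^sup>2) - 2 * mu * (\<Sum>j<n. p j * q j) + mu\<^sup>2 * (\<Sum>j<n. p j)"
    by (simp add: power2_diff algebra_simps sum.distrib sum_subtractf sum_distrib_left sum_distrib_right)
  also have "(\<Sum>j<n. p j * q j) = mu" by (simp add: mu_def true_mu_def)
  finally show ?thesis using ps unfolding true_v2_def mu_def by (simp add: power2_eq_square)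
qed

lemma true_v2_nonneg:
  assumes p0: "\<And>j. j < n \<Longrightarrow> 0 \<le> p j" and ps: "(\<Sum>j<n. p j) = 1"
  shows "0 \<le> true_v2 n p q"
  unfolding true_v2_alt[OF ps] using p0 by (intro sum_nonneg mult_nonneg_nonneg) auto

lemma true_mu_range:
  assumes n: "1 \<le> n" and p0: "\<And>j. j < n \<Longrightarrow> 0 \<le> p j" and ps: "(\<Sum>j<n. p j) = 1"
  shows "Min (q ` {..<n}) \<le> true_mu n p q" "true_mu n p q \<le> Max (q ` {..<n})"
proof -
  have fin: "finite (q ` {..<n})" "q ` {..<n} \<noteq> {}" using n by (auto simp: lessThan_empty_iff)
  have "(\<Sum>j<n. p j * Min (q ` {..<n})) \<le> (\<Sum>j<n. p j * q j)"
    using p0 fin by (intro sum_mono mult_left_mono) auto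
  then show "Min (q ` {..<n}) \<le> true_mu n p q"
    using ps by (simp add: true_mu_def sum_distrib_right[symmetric])
  have "(\<Sum>j<n. p j * q j) \<le> (\<Sum>j<n. p j * Max (q ` {..<n}))"
    using p0 fin by (intro sum_mono mult_left_mono) auto
  then show "true_mu n p q \<le> Max (q ` {..<n})"
    using ps by (simp add: true_mu_def sum_distrib_right[symmetric])
qed

lemma dev_le_Rng:
  assumes n: "1 \<le> n" and p0: "\<And>j. j < n \<Longrightarrow> 0 \<le> p j" and ps: "(\<Sum>j<n. p j) = 1"
    and j: "j < n"
  shows "\<bar>q j - true_mu n p q\<bar> \<le> Rng n q"
proof -
  have fin: "finite (q ` {..<n})" using n by (auto simp: lessThan_empty_iff)
  have "Min (q ` {..<n}) \<le> q j" "q j \<le> Max (q ` {..<n})" using fin j by auto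
  then show ?thesis using true_mu_range[OF n p0 ps, of q] unfolding Rng_def by auto
qed

lemma sq_half: "(x - y)\<^sup>2 / 2 \<le> x\<^sup>2 + (y::real)\<^sup>2"
proof -
  have e: "(x-y)\<^sup>2 + (x+y)\<^sup>2 = 2*(x\<^sup>2+y\<^sup>2)" by (simp add: power2_eq_square algebra_simps)
  have h: "0 \<le> (x+y)\<^sup>2" by simp
  have g: "\<And>a b c::real. a + b = 2*c \<Longrightarrow> 0 \<le> b \<Longrightarrow> a/2 \<le> c" by linarith
  show ?thesis by (rule g[OF e h])
qed

lemma true_v2_ge_A1:
  fixes p q :: "nat \<Rightarrow> real"
  assumes n: "2 \<le> n" and p0: "\<And>j. j < n \<Longrightarrow> 0 \<le> p j" and ps: "(\<Sum>j<n. p j) = 1"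
  shows "A1_term n p q \<le> true_v2 n p q"
proof (cases "Gamma_star n p = \<infinity>")
  case True
  then show ?thesis using true_v2_nonneg[OF p0 ps] by (simp add: A1_term_def)
next
  case False
  have fin: "finite (p ` {..<n})" "p ` {..<n} \<noteq> {}" using n by (auto simp: lessThan_empty_iff)
  have finq: "finite (q ` {..<n})" "q ` {..<n} \<noteq> {}" using n by (auto simp: lessThan_empty_iff)
  define m where "m = Min (p ` {..<n})"
  define M where "M = Max (p ` {..<n})"
  have mle: "m \<le> p j" if "j < n" for j unfolding m_def using fin that by auto
  have Mge: "p j \<le> M" if "j < n" for j unfolding M_def using fin that by auto
  have m0: "0 \<le> m" unfolding m_def using fin p0 by (auto simp: Min_ge_iff)
  have mne: "m \<noteq> 0" using False unfolding Gamma_star_def m_def by (auto split: if_splits)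
  with m0 have mpos: "0 < m" by simp
  define gs where "gs = M / m"
  have gs: "Gamma_star n p = ereal gs" using mne unfolding Gamma_star_def gs_def m_def M_def by simp
  have "1 = (\<Sum>j<n. p j)" using ps by simp
  also have "\<dots> \<le> (\<Sum>j<n. M)" using Mge by (intro sum_mono) auto
  finally have nM: "1 \<le> real n * M" by simp
  have M_eq: "M = gs * m" using mpos unfolding gs_def by simp
  have gs1: "1 \<le> gs"
  proof -
    have "0 < n" using n by simp
    then have "m \<le> M" using mle Mge by (meson order_trans)
    then show ?thesis using mpos unfolding gs_def by simp
  qed
  define N where "N = real n * gs"
  have N2: "2 \<le> N" unfolding N_def using n gs1
    by (metis mult_mono' mult.right_neutral of_nat_le_iff of_nat_numeral order.trans linorder_not_le
        mult_le_cancel_left1 not_numeral_le_zero of_nat_0_le_iff)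
  have mN: "1 \<le> N * m" using nM M_eq unfolding N_def by (simp add: mult.assoc)
  define mu where "mu = true_mu n p q"
  obtain a where a: "a < n" "q a = Max (q ` {..<n})" using finq by (metis (no_types, lifting) Max_in imageE lessThan_iff)
  obtain b where b: "b < n" "q b = Min (q ` {..<n})" using finq by (metis (no_types, lifting) Min_in imageE lessThan_iff)
  define R where "R = Rng n q"
  have R: "R = q a - q b" unfolding R_def Rng_def using a b by simp
  have "R\<^sup>2 / 2 \<le> (q a - mu)\<^sup>2 + (q b - mu)\<^sup>2"
    using sq_half[of "q a - mu" "q b - mu"] unfolding R by simp
  have key: "m * (R\<^sup>2 / 2) \<le> true_v2 n p q"
  proof (cases "a = b")
    case True
    then have "R = 0" using R by simp
    then show ?thesis using true_v2_nonneg[OF p0 ps] by simp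
  next
    case False
    have "m * (R\<^sup>2 / 2) \<le> m * ((q a - mu)\<^sup>2 + (q b - mu)\<^sup>2)"
      using \<open>R\<^sup>2 / 2 \<le> _\<close> mpos by (intro mult_left_mono) auto
    also have "\<dots> \<le> p a * (q a - mu)\<^sup>2 + p b * (q b - mu)\<^sup>2"
      using mle a b by (simp add: distrib_left add_mono mult_right_mono)
    also have "\<dots> = (\<Sum>j\<in>{a,b}. p j * (q j - mu)\<^sup>2)" using False by simp
    also have "\<dots> \<le> (\<Sum>j<n. p j * (q j - mu)\<^sup>2)"
      using a b p0 by (intro sum_mono2) auto
    also have "\<dots> = true_v2 n p q" using true_v2_alt[OF ps] mu_def by simp
    finally show ?thesis .
  qed
  have "A1_term n p q = R\<^sup>2 / N ^ 3" unfolding A1_term_def using gs False R_def N_def by simp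
  also have "\<dots> \<le> m * (R\<^sup>2 / 2)"
  proof -
    have h: "1 / N ^ 3 \<le> m / 2"
    proof -
      have "2 * 1 \<le> N * N" using N2 by (intro mult_mono) auto
      then have "2 * 1 \<le> N * N * (N * m)" using mN N2 by (intro mult_mono) auto
      then show ?thesis using N2 mpos by (simp add: field_simps power3_eq_cube)
    qed
    have "R\<^sup>2 * (1 / N ^ 3) \<le> R\<^sup>2 * (m / 2)" by (rule mult_left_mono[OF h]) simp
    moreover have "R\<^sup>2 / N ^ 3 = R\<^sup>2 * (1 / N ^ 3)" "m * (R\<^sup>2 / 2) = R\<^sup>2 * (m / 2)" by simp_all
    ultimately show ?thesis by linarith
  qed
  finally show ?thesis using key by simp
qed

definition finpmf :: "'a set \<Rightarrow> ('a \<Rightarrow> real) \<Rightarrow> 'a pmf" where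
  "finpmf A f = embed_pmf (\<lambda>x. if x \<in> A then f x else 0)"

lemma pmf_finpmf:
  assumes A: "finite A" and f0: "\<And>x. x \<in> A \<Longrightarrow> 0 \<le> f x" and f1: "sum f A = 1"
  shows "pmf (finpmf A f) x = (if x \<in> A then f x else 0)"
  unfolding finpmf_def
proof (rule pmf_embed_pmf)
  show "\<And>x. 0 \<le> (if x \<in> A then f x else 0)" using f0 by auto
  have "(\<integral>\<^sup>+x. ennreal (if x \<in> A then f x else 0) \<partial>count_space UNIV)
      = (\<integral>\<^sup>+x. ennreal (f x) * indicator A x \<partial>count_space UNIV)"
    by (intro nn_integral_cong) (auto simp: indicator_def)
  also have "\<dots> = (\<integral>\<^sup>+x. ennreal (f x) \<partial>count_space A)"
    by (simp add: nn_integral_count_space_indicator)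
  also have "\<dots> = (\<Sum>x\<in>A. ennreal (f x))" using A by (simp add: nn_integral_count_space_finite)
  also have "\<dots> = ennreal (sum f A)" using f0 by simp
  finally show "(\<integral>\<^sup>+x. ennreal (if x \<in> A then f x else 0) \<partial>count_space UNIV) = 1"
    using f1 by simp
qed

lemma integral_finpmf:
  fixes g :: "'a \<Rightarrow> 'b::{banach, second_countable_topology}"
  assumes A: "finite A" and f0: "\<And>x. x \<in> A \<Longrightarrow> 0 \<le> f x" and f1: "sum f A = 1"
  shows "(LINT x|measure_pmf (finpmf A f). g x) = (\<Sum>a\<in>A. f a *\<^sub>R g a)"
proof -
  have "(LINT x|measure_pmf (finpmf A f). g x) = (\<Sum>a\<in>A. pmf (finpmf A f) a *\<^sub>R g a)"
    by (rule integral_measure_pmf[OF A]) (auto simp: set_pmf_eq pmf_finpmf[OF A f0 f1] split: if_splits)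
  also have "\<dots> = (\<Sum>a\<in>A. f a *\<^sub>R g a)"
    by (intro sum.cong) (auto simp: pmf_finpmf[OF A f0 f1])
  finally show ?thesis .
qed

lemma prob_z_nonneg:
  assumes "\<And>i j. i < I \<Longrightarrow> j < n i \<Longrightarrow> 0 \<le> p i j" and "z \<in> Zset I n"
  shows "0 \<le> prob_z I p z"
  using assms unfolding prob_z_def Zset_def by (auto intro!: prod_nonneg simp: PiE_iff)

lemma finite_Zset: "finite (Zset I n)"
  unfolding Zset_def by (intro finite_PiE) auto

lemma sum_prob_z:
  fixes f :: "nat \<Rightarrow> nat \<Rightarrow> 'c::comm_semiring_1"
  shows "(\<Sum>z\<in>Zset I n. \<Prod>i<I. f i (z i)) = (\<Prod>i<I. \<Sum>j<n i. f i j)"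
  unfolding Zset_def by (rule prod_sum_PiE[symmetric]) auto

lemma sum_prob_z1:
  assumes "\<And>i. i < I \<Longrightarrow> (\<Sum>j<n i. p i j) = 1"
  shows "(\<Sum>z\<in>Zset I n. prob_z I p z) = 1"
  unfolding prob_z_def sum_prob_z using assms by simp

lemma taylor2: "(\<Sum>k\<le>2. (\<i> * complex_of_real x) ^ k / fact k) = complex_of_real (1 - x\<^sup>2 / 2) + \<i> * complex_of_real x"
  by (simp add: numeral_2_eq_2 power2_eq_square field_simps)

lemma phi_bound:
  fixes p y :: "nat \<Rightarrow> real"
  assumes p0: "\<And>j. j < n \<Longrightarrow> 0 \<le> p j" and ps: "(\<Sum>j<n. p j) = 1"
    and c0: "(\<Sum>j<n. p j * y j) = 0"
    and yr: "\<And>j. j < n \<Longrightarrow> \<bar>y j\<bar> \<le> r"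
  shows "cmod ((\<Sum>j<n. p j *\<^sub>R iexp (t * y j)) - complex_of_real (1 - t\<^sup>2 * (\<Sum>j<n. p j * (y j)\<^sup>2) / 2))
           \<le> \<bar>t\<bar> ^ 3 * r * (\<Sum>j<n. p j * (y j)\<^sup>2) / 6"
proof -
  define s where "s = (\<Sum>j<n. p j * (y j)\<^sup>2)"
  define a where "a j = complex_of_real (1 - (t * y j)\<^sup>2 / 2) + \<i> * complex_of_real (t * y j)" for j
  have sa: "(\<Sum>j<n. p j *\<^sub>R a j) = complex_of_real (1 - t\<^sup>2 * s / 2)"
  proof -
    have "(\<Sum>j<n. p j *\<^sub>R a j) = complex_of_real (\<Sum>j<n. p j * (1 - (t * y j)\<^sup>2 / 2)) + \<i> * complex_of_real (t * (\<Sum>j<n. p j * y j))"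
    proof -
      have e: "\<And>j. p j *\<^sub>R a j = complex_of_real (p j * (1 - (t * y j)\<^sup>2 / 2)) + \<i> * complex_of_real (t * (p j * y j))"
        by (simp add: a_def scaleR_conv_of_real algebra_simps)
      show ?thesis unfolding e sum.distrib
        by (simp add: of_real_sum[symmetric] sum_distrib_left[symmetric])
    qed
    also have "(\<Sum>j<n. p j * (1 - (t * y j)\<^sup>2 / 2)) = (\<Sum>j<n. p j) - t\<^sup>2 / 2 * s"
      unfolding s_def by (simp add: algebra_simps sum_subtractf sum_distrib_left power_mult_distrib)
    finally show ?thesis using ps c0 by simp
  qed
  have "(\<Sum>j<n. p j *\<^sub>R iexp (t * y j)) - complex_of_real (1 - t\<^sup>2 * s / 2)
      = (\<Sum>j<n. p j *\<^sub>R (iexp (t * y j) - a j))"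
    using sa by (simp add: scaleR_diff_right sum_subtractf)
  also have "cmod \<dots> \<le> (\<Sum>j<n. cmod (p j *\<^sub>R (iexp (t * y j) - a j)))"
    by (rule norm_sum)
  also have "\<dots> \<le> (\<Sum>j<n. p j * (\<bar>t\<bar> ^ 3 * r * (y j)\<^sup>2 / 6))"
  proof (intro sum_mono)
    fix j assume j: "j \<in> {..<n}"
    have "cmod (iexp (t * y j) - a j) \<le> \<bar>t * y j\<bar> ^ Suc 2 / fact (Suc 2)"
      using iexp_approx1[of "t * y j" 2] unfolding a_def taylor2 by simp
    also have "\<dots> = \<bar>t\<bar> ^ 3 * (\<bar>y j\<bar> * (y j)\<^sup>2) / 6"
    proof -
      have "\<bar>y j\<bar> ^ 3 = \<bar>y j\<bar> * (y j)\<^sup>2" by (simp add: power3_eq_cube power2_eq_square abs_mult_self_eq)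
      moreover have "fact (Suc 2) = (6::real)" by (simp add: fact_numeral)
      ultimately show ?thesis by (simp add: abs_mult power_mult_distrib)
    qed
    also have "\<dots> \<le> \<bar>t\<bar> ^ 3 * (r * (y j)\<^sup>2) / 6"
      using yr[of j] j by (intro divide_right_mono mult_left_mono mult_right_mono) auto
    finally have cb: "cmod (iexp (t * y j) - a j) \<le> \<bar>t\<bar> ^ 3 * r * (y j)\<^sup>2 / 6" by (simp add: mult.assoc)
    then show "cmod (p j *\<^sub>R (iexp (t * y j) - a j)) \<le> p j * (\<bar>t\<bar> ^ 3 * r * (y j)\<^sup>2 / 6)"
      using p0[of j] j mult_left_mono[OF cb, of "p j"] by simp
  qed
  also have "\<dots> = \<bar>t\<bar> ^ 3 * r * s / 6"
    unfolding s_def by (simp add: sum_distrib_left sum_divide_distrib algebra_simps)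
  finally show ?thesis unfolding s_def .
qed

lemma phi_norm:
  fixes p y :: "nat \<Rightarrow> real"
  assumes p0: "\<And>j. j < n \<Longrightarrow> 0 \<le> p j" and ps: "(\<Sum>j<n. p j) = 1"
  shows "cmod (\<Sum>j<n. p j *\<^sub>R iexp (t * y j)) \<le> 1"
proof -
  have "cmod (\<Sum>j<n. p j *\<^sub>R iexp (t * y j)) \<le> (\<Sum>j<n. cmod (p j *\<^sub>R iexp (t * y j)))"
    by (rule norm_sum)
  also have "\<dots> = (\<Sum>j<n. p j)"
    using p0 by (intro sum.cong) (auto simp: norm_exp_i_times)
  finally show ?thesis using ps by simp
qed

lemma char_prod:
  fixes nn :: "nat \<Rightarrow> nat" and pp y :: "nat \<Rightarrow> nat \<Rightarrow> real"
  assumes p0: "\<And>i j. i < I \<Longrightarrow> j < nn i \<Longrightarrow> 0 \<le> pp i j"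
    and ps: "\<And>i. i < I \<Longrightarrow> (\<Sum>j<nn i. pp i j) = 1"
  shows "char (distr (measure_pmf (finpmf (Zset I nn) (prob_z I pp))) borel (\<lambda>z. \<Sum>i<I. y i (z i))) t
       = (\<Prod>i<I. \<Sum>j<nn i. pp i j *\<^sub>R iexp (t * y i j))"
proof -
  have f0: "\<And>z. z \<in> Zset I nn \<Longrightarrow> 0 \<le> prob_z I pp z" using prob_z_nonneg p0 by blast
  have f1: "sum (prob_z I pp) (Zset I nn) = 1" using sum_prob_z1 ps by blast
  have "char (distr (measure_pmf (finpmf (Zset I nn) (prob_z I pp))) borel (\<lambda>z. \<Sum>i<I. y i (z i))) t
      = (CLINT z|measure_pmf (finpmf (Zset I nn) (prob_z I pp)). iexp (t * (\<Sum>i<I. y i (z i))))"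
    unfolding char_def by (subst integral_distr) auto
  also have "\<dots> = (\<Sum>z\<in>Zset I nn. prob_z I pp z *\<^sub>R iexp (t * (\<Sum>i<I. y i (z i))))"
    by (rule integral_finpmf[OF finite_Zset f0 f1])
  also have "\<dots> = (\<Sum>z\<in>Zset I nn. \<Prod>i<I. pp i (z i) *\<^sub>R iexp (t * y i (z i)))"
  proof (intro sum.cong refl)
    fix z
    have "iexp (t * (\<Sum>i<I. y i (z i))) = (\<Prod>i<I. iexp (t * y i (z i)))"
      by (simp add: sum_distrib_left exp_sum[symmetric] algebra_simps)
    then show "prob_z I pp z *\<^sub>R iexp (t * (\<Sum>i<I. y i (z i))) = (\<Prod>i<I. pp i (z i) *\<^sub>R iexp (t * y i (z i)))"
      by (simp add: prob_z_def scaleR_conv_of_real of_real_prod prod.distrib)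
  qed
  also have "\<dots> = (\<Prod>i<I. \<Sum>j<nn i. pp i j *\<^sub>R iexp (t * y i j))"
    by (rule sum_prob_z)
  finally show ?thesis .
qed

lemma exp_neg_approx:
  fixes a :: real assumes a: "0 \<le> a"
  shows "\<bar>(1 - a) - exp (- a)\<bar> \<le> a\<^sup>2"
proof -
  have l: "1 - a \<le> exp (- a)" using exp_ge_add_one_self[of "-a"] by simp
  have "1 + a \<le> exp a" by simp
  then have "exp (- a) \<le> 1 / (1 + a)" using a by (simp add: exp_minus field_simps)
  also have "1 / (1 + a) = (1 - a) + a\<^sup>2 / (1 + a)" using a by (simp add: field_simps power2_eq_square)
  also have "a\<^sup>2 / (1 + a) \<le> a\<^sup>2" using a by (simp add: divide_le_eq field_simps)
  finally show ?thesis using l by simp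
qed

lemma char_bound_fixed:
  fixes nn :: "nat \<Rightarrow> nat" and pp y :: "nat \<Rightarrow> nat \<Rightarrow> real" and r t :: real
  assumes p0: "\<And>i j. i < I \<Longrightarrow> j < nn i \<Longrightarrow> 0 \<le> pp i j"
    and ps: "\<And>i. i < I \<Longrightarrow> (\<Sum>j<nn i. pp i j) = 1"
    and c0: "\<And>i. i < I \<Longrightarrow> (\<Sum>j<nn i. pp i j * y i j) = 0"
    and v1: "(\<Sum>i<I. \<Sum>j<nn i. pp i j * (y i j)\<^sup>2) = 1"
    and yr: "\<And>i j. i < I \<Longrightarrow> j < nn i \<Longrightarrow> \<bar>y i j\<bar> \<le> r"
    and rt: "r\<^sup>2 * t\<^sup>2 \<le> 2"
  shows "cmod ((\<Prod>i<I. \<Sum>j<nn i. pp i j *\<^sub>R iexp (t * y i j)) - complex_of_real (exp (- (t\<^sup>2) / 2)))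
      \<le> \<bar>t\<bar> ^ 3 * r / 6 + t ^ 4 * r\<^sup>2 / 4"
proof -
  define s where "s i = (\<Sum>j<nn i. pp i j * (y i j)\<^sup>2)" for i
  define a where "a i = t\<^sup>2 * s i / 2" for i
  define Phi where "Phi i = (\<Sum>j<nn i. pp i j *\<^sub>R iexp (t * y i j))" for i
  define psi where "psi i = complex_of_real (1 - a i)" for i
  define ee where "ee i = complex_of_real (exp (- a i))" for i
  have I0: "0 < I" using v1 by (cases I) auto
  have n0: "0 < nn 0" using ps[OF I0] by (cases "nn 0") auto
  have r0: "0 \<le> r" using yr[OF I0 n0] by linarith
  have s0: "0 \<le> s i" if "i < I" for i unfolding s_def using p0 that by (intro sum_nonneg mult_nonneg_nonneg) auto
  have sr: "s i \<le> r\<^sup>2" if i: "i < I" for i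
  proof -
    have "s i \<le> (\<Sum>j<nn i. pp i j * r\<^sup>2)" unfolding s_def
    proof (intro sum_mono mult_left_mono)
      fix j assume "j \<in> {..<nn i}"
      then have "\<bar>y i j\<bar> \<le> r" using yr i by auto
      then show "(y i j)\<^sup>2 \<le> r\<^sup>2" by (metis abs_ge_zero power2_abs power_mono)
      show "0 \<le> pp i j" using p0 i \<open>j \<in> _\<close> by auto
    qed
    also have "\<dots> = r\<^sup>2" using ps[OF i] by (simp add: sum_distrib_right[symmetric])
    finally show ?thesis .
  qed
  have a0: "0 \<le> a i" if "i < I" for i unfolding a_def using s0[OF that] by simp
  have ar: "a i \<le> t\<^sup>2 * r\<^sup>2 / 2" if "i < I" for i unfolding a_def using sr[OF that]
    by (intro divide_right_mono mult_left_mono) auto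
  have a1: "a i \<le> 1" if "i < I" for i using ar[OF that] rt by (simp add: mult.commute)
  have sumA: "(\<Sum>i<I. a i) = t\<^sup>2 / 2" unfolding a_def using v1 s_def
    by (simp add: sum_divide_distrib[symmetric] sum_distrib_left[symmetric])
  have nPhi: "cmod (Phi i) \<le> 1" if "i < I" for i unfolding Phi_def using p0 ps that by (intro phi_norm) auto
  have npsi: "cmod (psi i) \<le> 1" if "i < I" for i unfolding psi_def using a0[OF that] a1[OF that] by (simp only: norm_of_real)
  have nee: "cmod (ee i) \<le> 1" if "i < I" for i unfolding ee_def using a0[OF that] by simp
  have d1: "cmod (Phi i - psi i) \<le> \<bar>t\<bar> ^ 3 * r * s i / 6" if "i < I" for i
    unfolding Phi_def psi_def a_def s_def
    using phi_bound[of "nn i" "pp i" "y i" r t] p0 ps c0 yr that by (simp add: mult.assoc)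
  have d2: "cmod (psi i - ee i) \<le> a i * (t\<^sup>2 * r\<^sup>2 / 2)" if "i < I" for i
  proof -
    have "cmod (psi i - ee i) = \<bar>(1 - a i) - exp (- a i)\<bar>" unfolding psi_def ee_def
      by (metis norm_of_real of_real_diff)
    also have "\<dots> \<le> (a i)\<^sup>2" by (rule exp_neg_approx[OF a0[OF that]])
    also have "\<dots> = a i * a i" by (simp add: power2_eq_square)
    also have "\<dots> \<le> a i * (t\<^sup>2 * r\<^sup>2 / 2)" using ar[OF that] a0[OF that] by (intro mult_left_mono) auto
    finally show ?thesis .
  qed
  have eprod: "(\<Prod>i<I. ee i) = complex_of_real (exp (- (t\<^sup>2) / 2))"
  proof -
    have "(\<Prod>i<I. ee i) = complex_of_real (\<Prod>i<I. exp (- a i))" unfolding ee_def by simp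
    also have "(\<Prod>i<I. exp (- a i)) = exp (\<Sum>i<I. - a i)" by (simp add: exp_sum)
    also have "(\<Sum>i<I. - a i) = - (t\<^sup>2) / 2" using sumA by (simp add: sum_negf)
    finally show ?thesis .
  qed
  have "cmod ((\<Prod>i<I. Phi i) - (\<Prod>i<I. ee i))
      \<le> cmod ((\<Prod>i<I. Phi i) - (\<Prod>i<I. psi i)) + cmod ((\<Prod>i<I. psi i) - (\<Prod>i<I. ee i))"
    by (rule norm_diff_triangle_ineq[THEN order_trans[rotated]]) (simp add: algebra_simps)
  also have "cmod ((\<Prod>i<I. Phi i) - (\<Prod>i<I. psi i)) \<le> (\<Sum>i<I. cmod (Phi i - psi i))"
    by (rule norm_prod_diff) (auto intro: nPhi npsi)
  also have "\<dots> \<le> (\<Sum>i<I. \<bar>t\<bar> ^ 3 * r * s i / 6)" by (intro sum_mono d1) auto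
  also have "\<dots> = \<bar>t\<bar> ^ 3 * r / 6" using v1 unfolding s_def
    by (simp add: sum_divide_distrib[symmetric] sum_distrib_left[symmetric])
  also have "cmod ((\<Prod>i<I. psi i) - (\<Prod>i<I. ee i)) \<le> (\<Sum>i<I. cmod (psi i - ee i))"
    by (rule norm_prod_diff) (auto intro: nee npsi)
  also have "\<dots> \<le> (\<Sum>i<I. a i * (t\<^sup>2 * r\<^sup>2 / 2))" by (intro sum_mono d2) auto
  also have "\<dots> = (\<Sum>i<I. a i) * (t\<^sup>2 * r\<^sup>2 / 2)" by (simp add: sum_distrib_right)
  also have "\<dots> = t ^ 4 * r\<^sup>2 / 4" unfolding sumA
    by (simp add: power4_eq_xxxx power2_eq_square)
  finally show ?thesis unfolding Phi_def eprod by simp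
qed

lemma clt_seq:
  fixes nn :: "nat \<Rightarrow> nat \<Rightarrow> nat" and pp y :: "nat \<Rightarrow> nat \<Rightarrow> nat \<Rightarrow> real" and r :: "nat \<Rightarrow> real"
  assumes p0: "\<And>I i j. i < I \<Longrightarrow> j < nn I i \<Longrightarrow> 0 \<le> pp I i j"
    and ps: "\<And>I i. i < I \<Longrightarrow> (\<Sum>j<nn I i. pp I i j) = 1"
    and c0: "\<And>I i. i < I \<Longrightarrow> (\<Sum>j<nn I i. pp I i j * y I i j) = 0"
    and v1: "eventually (\<lambda>I. (\<Sum>i<I. \<Sum>j<nn I i. pp I i j * (y I i j)\<^sup>2) = 1) sequentially"
    and yr: "\<And>I i j. i < I \<Longrightarrow> j < nn I i \<Longrightarrow> \<bar>y I i j\<bar> \<le> r I"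
    and r0: "r \<longlonglongrightarrow> 0"
  shows "weak_conv_m (\<lambda>I. distr (measure_pmf (finpmf (Zset I (nn I)) (prob_z I (pp I)))) borel
            (\<lambda>z. \<Sum>i<I. y I i (z i))) std_normal_distribution"
proof (rule levy_continuity)
  fix I
  show "real_distribution (distr (measure_pmf (finpmf (Zset I (nn I)) (prob_z I (pp I)))) borel
            (\<lambda>z. \<Sum>i<I. y I i (z i)))"
    by (intro prob_space.real_distribution_distr) (auto simp: prob_space_measure_pmf)
next
  show "real_distribution std_normal_distribution" by (rule real_dist_normal_dist)
next
  fix t :: real
  define C where "C I = char (distr (measure_pmf (finpmf (Zset I (nn I)) (prob_z I (pp I)))) borel
            (\<lambda>z. \<Sum>i<I. y I i (z i))) t" for I
  define B where "B I = \<bar>t\<bar> ^ 3 * r I / 6 + t ^ 4 * (r I)\<^sup>2 / 4" for I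
  have Cp: "C I = (\<Prod>i<I. \<Sum>j<nn I i. pp I i j *\<^sub>R iexp (t * y I i j))" for I
    unfolding C_def by (rule char_prod) (auto intro: p0 ps)
  have "(\<lambda>I. (r I)\<^sup>2 * t\<^sup>2) \<longlonglongrightarrow> 0\<^sup>2 * t\<^sup>2"
    by (intro tendsto_intros r0)
  then have ev2: "eventually (\<lambda>I. (r I)\<^sup>2 * t\<^sup>2 < 2) sequentially"
    by (rule order_tendstoD) simp
  have ev: "eventually (\<lambda>I. cmod (C I - complex_of_real (exp (- (t\<^sup>2) / 2))) \<le> B I) sequentially"
    using ev2 v1
  proof eventually_elim
    case (elim I)
    show ?case unfolding Cp B_def
      by (rule char_bound_fixed) (use elim p0 ps c0 yr in auto)
  qed
  have "B \<longlonglongrightarrow> \<bar>t\<bar> ^ 3 * 0 / 6 + t ^ 4 * 0\<^sup>2 / 4"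
    unfolding B_def by (intro tendsto_intros r0) simp_all
  then have B0: "B \<longlonglongrightarrow> 0" by simp
  have "(\<lambda>I. C I - complex_of_real (exp (- (t\<^sup>2) / 2))) \<longlonglongrightarrow> 0"
    by (rule Lim_null_comparison[OF ev B0])
  then have "C \<longlonglongrightarrow> complex_of_real (exp (- (t\<^sup>2) / 2))"
    by (rule LIM_zero_cancel)
  then show "(\<lambda>I. char (distr (measure_pmf (finpmf (Zset I (nn I)) (prob_z I (pp I)))) borel
            (\<lambda>z. \<Sum>i<I. y I i (z i))) t) \<longlonglongrightarrow> char std_normal_distribution t"
    unfolding C_def char_std_normal_distribution by simp
qed

lemma measure_distr_finpmf:
  assumes A: "finite A" and f0: "\<And>x. x \<in> A \<Longrightarrow> 0 \<le> f x" and f1: "sum f A = 1"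
    and that: "S \<in> sets borel"
  shows "measure (distr (measure_pmf (finpmf A f)) borel W) S
       = (\<Sum>a\<in>A. f a * indicator S (W a))"
proof -
  have "measure (distr (measure_pmf (finpmf A f)) borel W) S = measure (measure_pmf (finpmf A f)) (W -` S)"
    using that by (subst measure_distr) auto
  also have "\<dots> = (LINT x|measure_pmf (finpmf A f). indicator (W -` S) x)"
    by simp
  also have "\<dots> = (\<Sum>a\<in>A. f a *\<^sub>R indicator (W -` S) a)"
    by (rule integral_finpmf[OF A f0 f1])
  finally show ?thesis by (simp add: indicator_def)
qed

lemma isCont_Phi: "isCont Phi x"
proof -
  interpret N: real_distribution std_normal_distribution by (rule real_dist_normal_dist)
  have "emeasure std_normal_distribution {x} = (\<integral>\<^sup>+ y. ennreal (std_normal_density y) * indicator {x} y \<partial>lborel)"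
    by (subst emeasure_density) auto
  also have "\<dots> = (\<integral>\<^sup>+ y. 0 \<partial>(lborel::real measure))"
  proof (rule nn_integral_cong_AE)
    show "AE y in lborel. ennreal (std_normal_density y) * indicator {x} y = 0"
      using AE_lborel_singleton[of x] by eventually_elim auto
  qed
  finally have "measure std_normal_distribution {x} = 0" by (simp add: measure_def)
  then show ?thesis unfolding Phi_def by (simp add: N.isCont_cdf)
qed

lemma S_le_V:
  fixes n :: "nat \<Rightarrow> nat" and p q :: "nat \<Rightarrow> nat \<Rightarrow> real"
  assumes sizes: "\<And>i. i<I \<Longrightarrow> 2 \<le> n i" and p0: "\<And>i j. i<I \<Longrightarrow> j<n i \<Longrightarrow> 0 \<le> p i j"
   and ps: "\<And>i. i<I \<Longrightarrow> (\<Sum>j<n i. p i j) = 1"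
  shows "S_A1 I n p q \<le> (\<Sum>i<I. true_v2 (n i) (p i) (q i))"
  unfolding S_A1_def by (intro sum_mono true_v2_ge_A1) (use assms in auto)

lemma thr_bound:
  fixes n :: "nat \<Rightarrow> nat" and p q :: "nat \<Rightarrow> nat \<Rightarrow> real" and G :: "nat \<Rightarrow> ereal" and c :: real
  assumes sizes: "\<And>i. i<I \<Longrightarrow> 2 \<le> n i" and p0: "\<And>i j. i<I \<Longrightarrow> j<n i \<Longrightarrow> 0 \<le> p i j"
   and ps: "\<And>i. i<I \<Longrightarrow> (\<Sum>j<n i. p i j) = 1" and G1: "\<And>i. i<I \<Longrightarrow> 1 \<le> G i"
   and Gd: "\<And>i. i<I \<Longrightarrow> Gamma_star (n i) (p i) \<le> G i"
   and S: "0 < S_A1 I n p q" and A2: "ereal c < A2_quantity I n p q G" and c: "0 \<le> c"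
  shows "(\<Sum>i<I. true_mu (n i) (p i) (q i)) + c * sqrt (\<Sum>i<I. true_v2 (n i) (p i) (q i))
          \<le> mu_Gamma I n q G + c * sigma_Gamma I n q G"
proof -
  define mu where "mu i = true_mu (n i) (p i) (q i)" for i
  define v2 where "v2 i = true_v2 (n i) (p i) (q i)" for i
  define mG where "mG i = mu_G (n i) (q i) (G i)" for i
  define vG where "vG i = v2_G (n i) (q i) (G i)" for i
  define V where "V = (\<Sum>i<I. v2 i)"
  define A where "A = A_set I n p q G"
  define D where "D = (\<Sum>i\<in>A. mG i - mu i)"
  define E where "E = (\<Sum>i\<in>A. v2 i - vG i)"
  define v where "v = sqrt V"
  have SV: "S_A1 I n p q \<le> V" unfolding V_def v2_def by (rule S_le_V) (use assms in auto)
  have Vpos: "0 < V" using S SV by simp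
  have vpos: "0 < v" using Vpos v_def by simp
  have vv: "v * v = V" using Vpos v_def by simp
  have sSv: "sqrt (S_A1 I n p q) \<le> v" unfolding v_def using SV by simp
  have Asub: "A \<subseteq> {..<I}" unfolding A_def A_set_def by auto
  have Aiff: "i \<in> A \<longleftrightarrow> i < I \<and> vG i < v2 i" for i unfolding A_def A_set_def vG_def v2_def by auto
  have finA: "finite A" using finite_subset[OF Asub] by simp
  have mge: "mu i \<le> mG i" if "i < I" for i unfolding mu_def mG_def
    by (rule mu_G_ge) (use assms that in auto)
  have vG0: "0 \<le> vG i" if "i < I" for i unfolding vG_def by (rule v2_G_nonneg) (use assms that in auto)
  have D0: "0 \<le> D" unfolding D_def using mge Asub by (intro sum_nonneg) auto
  have E0: "0 \<le> E" unfolding E_def using Aiff by (intro sum_nonneg) auto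
  have Dall: "D \<le> mu_Gamma I n q G - (\<Sum>i<I. mu i)"
  proof -
    have "D \<le> (\<Sum>i<I. mG i - mu i)" unfolding D_def
      using Asub mge by (intro sum_mono2) auto
    then show ?thesis unfolding mu_Gamma_def mG_def by (simp add: sum_subtractf)
  qed
  have sumvG: "V - E \<le> (\<Sum>i<I. vG i)"
  proof -
    have "(\<Sum>i<I. v2 i - vG i) \<le> E"
    proof -
      have "(\<Sum>i<I. v2 i - vG i) = (\<Sum>i\<in>A. v2 i - vG i) + (\<Sum>i\<in>{..<I} - A. v2 i - vG i)"
        using sum.subset_diff[OF Asub finite_lessThan, of "\<lambda>i. v2 i - vG i"] by simp
      moreover have "(\<Sum>i\<in>{..<I} - A. v2 i - vG i) \<le> 0"
      proof (rule sum_nonpos)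
        fix i assume i: "i \<in> {..<I} - A"
        then have "\<not> vG i < v2 i" using Aiff by blast
        then show "v2 i - vG i \<le> 0" by simp
      qed
      ultimately show ?thesis unfolding E_def by linarith
    qed
    moreover have "(\<Sum>i<I. v2 i - vG i) = V - (\<Sum>i<I. vG i)" unfolding V_def by (rule sum_subtractf)
    ultimately show ?thesis by linarith
  qed
  have sig0: "0 \<le> (\<Sum>i<I. vG i)" using vG0 by (intro sum_nonneg) auto
  have sig: "v - E / v \<le> sigma_Gamma I n q G"
  proof (cases "V - E \<le> 0")
    case True
    have "v - E / v = (V - E) / v" using vpos vv by (simp add: field_simps)
    also have "\<dots> \<le> 0" using True vpos by (simp add: divide_nonpos_pos)
    also have "0 \<le> sigma_Gamma I n q G" unfolding sigma_Gamma_def vG_def[symmetric] using sig0 by simp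
    finally show ?thesis .
  next
    case False
    define w where "w = sqrt (V - E)"
    have w0: "0 \<le> w" unfolding w_def using False by simp
    have ww: "w * w = V - E" using False unfolding w_def by simp
    have wv: "w \<le> v" unfolding w_def v_def using E0 by (intro real_sqrt_le_mono) simp
    have "v - E / v = (V - E) / v" using vpos vv by (simp add: field_simps)
    also have "\<dots> = w * (w / v)" using ww by simp
    also have "\<dots> \<le> w * 1" using wv vpos w0 by (intro mult_left_mono) auto
    also have "w \<le> sigma_Gamma I n q G" unfolding sigma_Gamma_def w_def vG_def[symmetric]
      using sumvG by (simp add: vG_def)
    finally show ?thesis by simp
  qed
  have key: "c * E / v \<le> D"
  proof (cases "A = {}")
    case True
    then show ?thesis unfolding D_def E_def by simp
  next
    case False
    have Epos: "0 < E" unfolding E_def using False finA Aiff by (intro sum_pos) auto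
    have cardA: "0 < real (card A)" using False finA by (simp add: card_gt_0_iff)
    have "A2_quantity I n p q G = ereal (D / E * sqrt (S_A1 I n p q))"
    proof -
      have "Delta_mu I n p q G / Delta_v2 I n p q G = D / E"
        unfolding Delta_mu_def Delta_v2_def A_def[symmetric] D_def E_def mu_def mG_def v2_def vG_def
        using cardA by simp
      then show ?thesis unfolding A2_quantity_def using False A_def by simp
    qed
    then have "c < D / E * sqrt (S_A1 I n p q)" using A2 by simp
    also have "\<dots> \<le> D / E * v" using sSv D0 Epos by (intro mult_left_mono) auto
    finally have "c < D / E * v" .
    then have "c * E < D * v" using Epos by (simp add: field_simps)
    then show ?thesis using vpos by (simp add: field_simps)
  qed
  have "(\<Sum>i<I. mu i) + c * v \<le> (\<Sum>i<I. mu i) + D + c * (v - E / v)"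
    using key by (simp add: algebra_simps)
  also have "\<dots> \<le> mu_Gamma I n q G + c * sigma_Gamma I n q G"
    using Dall mult_left_mono[OF sig c] by linarith
  finally show ?thesis unfolding mu_def v2_def v_def V_def .
qed

theorem theorem4:
  fixes n :: "nat \<Rightarrow> nat \<Rightarrow> nat"
    and p :: "nat \<Rightarrow> nat \<Rightarrow> nat \<Rightarrow> real"
    and q :: "nat \<Rightarrow> nat \<Rightarrow> nat \<Rightarrow> real"
    and Gam :: "nat \<Rightarrow> nat \<Rightarrow> ereal"
  assumes sizes: "\<And>I i. i < I \<Longrightarrow> n I i \<ge> 2"
    and p_nonneg: "\<And>I i j. i < I \<Longrightarrow> j < n I i \<Longrightarrow> p I i j \<ge> 0"
    and p_sum: "\<And>I i. i < I \<Longrightarrow> (\<Sum>j<n I i. p I i j) = 1"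
    and Gam_ge1: "\<And>I i. i < I \<Longrightarrow> Gam I i \<ge> 1"
    and Gam_dom: "\<And>I i. i < I \<Longrightarrow> Gamma_star (n I i) (p I i) \<le> Gam I i"
    and A1_pos: "eventually (\<lambda>I. S_A1 I (n I) (p I) (q I) > 0) sequentially"
    and A1: "(\<lambda>I. (Max ((\<lambda>i. (Rng (n I i) (q I i))\<^sup>2) ` {..<I})) / S_A1 I (n I) (p I) (q I))
               \<longlonglongrightarrow> 0"
    and A2: "((\<lambda>I. A2_quantity I (n I) (p I) (q I) (Gam I)) \<longlongrightarrow> \<infinity>) sequentially"
    and c_nonneg: "(c::real) \<ge> 0"
  shows "limsup (\<lambda>I. ereal (prob_T_ge I (n I) (p I) (q I)
            (mu_Gamma I (n I) (q I) (Gam I) + c * sigma_Gamma I (n I) (q I) (Gam I))))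
         \<le> ereal (1 - Phi c)"
proof -
  define mu where "mu I i = true_mu (n I i) (p I i) (q I i)" for I i
  define V where "V I = (\<Sum>i<I. true_v2 (n I i) (p I i) (q I i))" for I
  define v where "v I = sqrt (V I)" for I
  define y where "y I i j = (q I i j - mu I i) / v I" for I i j
  define mx where "mx I = Max ((\<lambda>i. (Rng (n I i) (q I i))\<^sup>2) ` {..<I})" for I
  define r where "r I = sqrt (mx I) / v I" for I
  define S where "S I = S_A1 I (n I) (p I) (q I)" for I
  define Md where "Md I = distr (measure_pmf (finpmf (Zset I (n I)) (prob_z I (p I)))) borel
            (\<lambda>z. \<Sum>i<I. y I i (z i))" for I
  define thr where "thr I = mu_Gamma I (n I) (q I) (Gam I) + c * sigma_Gamma I (n I) (q I) (Gam I)" for I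
  have SV: "S I \<le> V I" for I unfolding S_def V_def
    by (rule S_le_V) (use sizes p_nonneg p_sum in auto)
  have v0: "0 \<le> v I" for I
  proof (cases "I = 0")
    case True then show ?thesis by (simp add: v_def V_def)
  next
    case False
    have "0 \<le> V I" unfolding V_def using p_nonneg p_sum by (intro sum_nonneg true_v2_nonneg) auto
    then show ?thesis by (simp add: v_def)
  qed
  have c0: "(\<Sum>j<n I i. p I i j * y I i j) = 0" if "i < I" for I i
  proof -
    have "(\<Sum>j<n I i. p I i j * (q I i j - mu I i)) = (\<Sum>j<n I i. p I i j * q I i j) - mu I i * (\<Sum>j<n I i. p I i j)"
      by (simp add: algebra_simps sum_subtractf sum_distrib_left)
    also have "\<dots> = 0" using p_sum[OF that] by (simp add: mu_def true_mu_def)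
    finally show ?thesis unfolding y_def by (simp add: sum_divide_distrib[symmetric])
  qed
  have v1: "eventually (\<lambda>I. (\<Sum>i<I. \<Sum>j<n I i. p I i j * (y I i j)\<^sup>2) = 1) sequentially"
    using A1_pos
  proof eventually_elim
    case (elim I)
    then have Vp: "0 < V I" using SV[of I] unfolding S_def by simp
    have "(\<Sum>i<I. \<Sum>j<n I i. p I i j * (y I i j)\<^sup>2) = (\<Sum>i<I. true_v2 (n I i) (p I i) (q I i) / V I)"
    proof (intro sum.cong refl)
      fix i assume "i \<in> {..<I}"
      then have "true_v2 (n I i) (p I i) (q I i) = (\<Sum>j<n I i. p I i j * (q I i j - mu I i)\<^sup>2)"
        using true_v2_alt p_sum unfolding mu_def by auto
      moreover have "(y I i j)\<^sup>2 = (q I i j - mu I i)\<^sup>2 / V I" for j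
        unfolding y_def v_def using Vp by (simp add: power_divide)
      ultimately show "(\<Sum>j<n I i. p I i j * (y I i j)\<^sup>2) = true_v2 (n I i) (p I i) (q I i) / V I"
        by (simp add: sum_divide_distrib)
    qed
    also have "\<dots> = 1" using Vp by (simp add: sum_divide_distrib[symmetric] V_def)
    finally show ?case .
  qed
  have yr: "\<bar>y I i j\<bar> \<le> r I" if ij: "i < I" "j < n I i" for I i j
  proof -
    have n1: "1 \<le> n I i" using sizes[OF ij(1)] by simp
    have d: "\<bar>q I i j - mu I i\<bar> \<le> Rng (n I i) (q I i)"
      unfolding mu_def by (rule dev_le_Rng) (use n1 p_nonneg p_sum ij in auto)
    have R0: "0 \<le> Rng (n I i) (q I i)" using d by linarith
    have "(Rng (n I i) (q I i))\<^sup>2 \<le> mx I" unfolding mx_def using ij by (intro Max_ge) auto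
    then have "sqrt ((Rng (n I i) (q I i))\<^sup>2) \<le> sqrt (mx I)" by (rule real_sqrt_le_mono)
    then have "Rng (n I i) (q I i) \<le> sqrt (mx I)" using R0 by simp
    with d have "\<bar>q I i j - mu I i\<bar> \<le> sqrt (mx I)" by linarith
    then show ?thesis unfolding y_def r_def using v0[of I] by (simp add: divide_right_mono)
  qed
  have r0: "r \<longlonglongrightarrow> 0"
  proof (rule tendsto_sandwich[where f="\<lambda>_. 0" and h="\<lambda>I. sqrt (mx I / S I)"])
    have mx0e: "eventually (\<lambda>I. 0 \<le> mx I) sequentially"
      using A1_pos
    proof eventually_elim
      case (elim I)
      then have Sp: "0 < S I" by (simp add: S_def)
      then have I0: "0 < I" unfolding S_def S_A1_def by (cases I) auto
      show "0 \<le> mx I" unfolding mx_def using I0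
        by (intro order_trans[OF _ Max_ge[of _ "(Rng (n I 0) (q I 0))\<^sup>2"]]) auto
    qed
    show "eventually (\<lambda>I. 0 \<le> r I) sequentially"
      using mx0e by eventually_elim (simp add: r_def v0)
    show "eventually (\<lambda>I. r I \<le> sqrt (mx I / S I)) sequentially"
      using A1_pos mx0e
    proof eventually_elim
      case (elim I)
      then have Sp: "0 < S I" and mx0: "0 \<le> mx I" by (simp_all add: S_def)
      have "r I = sqrt (mx I / V I)" unfolding r_def v_def by (simp add: real_sqrt_divide)
      also have "\<dots> \<le> sqrt (mx I / S I)" using Sp SV[of I] mx0
        by (intro real_sqrt_le_mono divide_left_mono) auto
      finally show ?case .
    qed
    show "(\<lambda>_. 0) \<longlonglongrightarrow> (0::real)" by simp
    have "(\<lambda>I. sqrt (mx I / S I)) \<longlonglongrightarrow> sqrt 0"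
      using A1 unfolding mx_def S_def by (intro tendsto_intros)
    then show "(\<lambda>I. sqrt (mx I / S I)) \<longlonglongrightarrow> 0" by simp
  qed
  have wc: "weak_conv_m Md std_normal_distribution"
    unfolding Md_def
    by (rule clt_seq[where r=r]) (use p_nonneg p_sum c0 v1 yr r0 in auto)
  have cdfconv: "(\<lambda>I. cdf (Md I) x) \<longlonglongrightarrow> Phi x" for x
    using wc isCont_Phi[of x] unfolding weak_conv_m_def weak_conv_def Phi_def by blast
  have pb: "eventually (\<lambda>I. prob_T_ge I (n I) (p I) (q I) (thr I) \<le> 1 - cdf (Md I) a) sequentially"
    if a: "a < c" for a
  proof -
    have ev2: "eventually (\<lambda>I. ereal c < A2_quantity I (n I) (p I) (q I) (Gam I)) sequentially"
      using A2 by (rule order_tendstoD) simp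
    show ?thesis using ev2 A1_pos
    proof eventually_elim
      case (elim I)
      have Sp: "0 < S I" using elim by (simp add: S_def)
      have Vp: "0 < V I" using Sp SV[of I] by simp
      have vp: "0 < v I" using Vp by (simp add: v_def)
      have tb: "(\<Sum>i<I. mu I i) + c * v I \<le> thr I"
        unfolding mu_def v_def V_def thr_def
        by (rule thr_bound) (use sizes p_nonneg p_sum Gam_ge1 Gam_dom elim c_nonneg in auto)
      have f0: "\<And>z. z \<in> Zset I (n I) \<Longrightarrow> 0 \<le> prob_z I (p I) z" using prob_z_nonneg p_nonneg by blast
      have f1: "sum (prob_z I (p I)) (Zset I (n I)) = 1" using sum_prob_z1 p_sum by blast
      define W where "W z = (\<Sum>i<I. y I i (z i))" for z
      have Weq: "W z = (Tstat I (q I) z - (\<Sum>i<I. mu I i)) / v I" for z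
        unfolding W_def y_def Tstat_def by (simp add: sum_divide_distrib[symmetric] sum_subtractf)
      have "prob_T_ge I (n I) (p I) (q I) (thr I)
          \<le> (\<Sum>z\<in>Zset I (n I). prob_z I (p I) z * indicator {a<..} (W z))"
        unfolding prob_T_ge_def
      proof (intro sum_mono)
        fix z assume z: "z \<in> Zset I (n I)"
        show "(if thr I \<le> Tstat I (q I) z then prob_z I (p I) z else 0) \<le> prob_z I (p I) z * indicator {a<..} (W z)"
        proof (cases "thr I \<le> Tstat I (q I) z")
          case True
          then have "c * v I \<le> Tstat I (q I) z - (\<Sum>i<I. mu I i)" using tb by linarith
          then have "c \<le> W z" unfolding Weq using vp by (simp add: field_simps)
          then show ?thesis using True a by (simp add: indicator_def)
        next
          case False
          then show ?thesis using f0[OF z] by (simp add: indicator_def)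
        qed
      qed
      also have "(\<Sum>z\<in>Zset I (n I). prob_z I (p I) z * indicator {a<..} (W z))
          = (\<Sum>z\<in>Zset I (n I). prob_z I (p I) z) - (\<Sum>z\<in>Zset I (n I). prob_z I (p I) z * indicator {..a} (W z))"
        by (simp add: sum_subtractf[symmetric]) (intro sum.cong refl, auto simp: indicator_def)
      also have "(\<Sum>z\<in>Zset I (n I). prob_z I (p I) z * indicator {..a} (W z)) = cdf (Md I) a"
        unfolding cdf_def Md_def W_def
        by (rule measure_distr_finpmf[symmetric, OF finite_Zset f0 f1]) auto
      finally show ?case using f1 by simp
    qed
  qed
  let ?L = "limsup (\<lambda>I. ereal (prob_T_ge I (n I) (p I) (q I) (thr I)))"
  have Lb: "?L \<le> ereal (1 - Phi a)" if "a < c" for a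
  proof -
    have "?L \<le> limsup (\<lambda>I. ereal (1 - cdf (Md I) a))"
      by (rule Limsup_mono) (use pb[OF that] in \<open>auto elim: eventually_mono\<close>)
    also have "limsup (\<lambda>I. ereal (1 - cdf (Md I) a)) = ereal (1 - Phi a)"
      by (intro lim_imp_Limsup) (auto intro!: tendsto_intros cdfconv)
    finally show ?thesis .
  qed
  have seq: "(\<lambda>k. ereal (1 - Phi (c - inverse (real (Suc k))))) \<longlonglongrightarrow> ereal (1 - Phi c)"
  proof -
    have "(\<lambda>k. c - inverse (real (Suc k))) \<longlonglongrightarrow> c - 0"
      by (intro tendsto_intros LIMSEQ_inverse_real_of_nat)
    then have "(\<lambda>k. Phi (c - inverse (real (Suc k)))) \<longlonglongrightarrow> Phi c"
      by (intro isCont_tendsto_compose[OF isCont_Phi]) simp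
    then show ?thesis by (intro tendsto_intros)
  qed
  have "?L \<le> ereal (1 - Phi c)"
    by (rule LIMSEQ_le_const[OF seq]) (auto intro!: Lb)
  then show ?thesis unfolding thr_def .
qed

end
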